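(* (a) $\mathcal{A}_<$ is $\boldsymbol{\Sigma}^0_1$ and hence $\mathcal{A}_\ge$ is $\boldsymbol{\Pi}^0_1$; $\mathcal{A}_\le$ is $\boldsymbol{\Pi}^0_2$ and hence $\mathcal{A}_>$ is $\boldsymbol{\Sigma}^0_2$; therefore $\mathcal{A}$ is $\boldsymbol{\Pi}^0_2$. (b) $\mathcal{B}^-_\le$ is $\boldsymbol{\Pi}^0_2$, $\mathcal{B}^-_\ge$ and $\mathcal{B}^+_\ge$ are $\boldsymbol{\Pi}^0_3$, and $\mathcal{B}^+_\le$ is $\boldsymbol{\Pi}^0_4$; therefore $\mathcal{B}^-_>$ is $\boldsymbol{\Sigma}^0_2$, $\mathcal{B}^-_<$ and $\mathcal{B}^+_<$ are $\boldsymbol{\Sigma}^0_3$, and $\mathcal{B}^+_>$ is $\boldsymbol{\Sigma}^0_4$; and $\mathcal{B}$ is $\boldsymbol{\Pi}^0_4$.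
   Context: $2^{\omega}$ is the Cantor space; $N_s=\{x\in2^\omega:s\subset x\}$; $\mu$ is the coin-tossing measure, $\mu(N_s)=2^{-\mathrm{lh}(s)}$. $\mathbf{K}$ is the Polish space of compact subsets of $2^\omega$ with the Vietoris topology; $\omega$ is discrete. For compact $K$ and $z\in2^\omega$: $\mathcal{D}^+_K(z)=\limsup_n\mu(K\cap N_{z\restriction n})/\mu(N_{z\restriction n})$, $\mathcal{D}^-_K(z)=\liminf_n$ of the same, $\mathcal{D}_K(z)$ the limit when it exists. For $\bowtie\in\{<,>,\le,\ge\}$: $\mathcal{A}_\bowtie=\{(K,z,n,r)\in\mathbf{K}\times2^\omega\times\omega\times[0;1]:\mu(K\cap N_{z\restriction n})\bowtie r\}$, $\mathcal{A}=\mathcal{A}_\le\cap\mathcal{A}_\ge$, $\mathcal{B}^\pm_\bowtie=\{(K,z,r)\in\mathbf{K}\times2^\omega\times[0;1]:\mathcal{D}^\pm_K(z)\bowtie r\}$, and $\mathcal{B}=\mathcal{B}^+_\le\cap\mathcal{B}^-_\ge=\{(K,z,r):\mathcal{D}_K(z)=r\}$. *)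

theory Defs
  imports "HOL-Analysis.Analysis" "HOL-Probability.Probability"
begin

definition cantor :: "(nat \<Rightarrow> bool) topology" where
  "cantor = product_topology (\<lambda>_. discrete_topology (UNIV :: bool set)) UNIV"

definition coin :: "(nat \<Rightarrow> bool) measure" where
  "coin = PiM UNIV (\<lambda>_::nat. measure_pmf (bernoulli_pmf (1/2)))"

definition mu :: "(nat \<Rightarrow> bool) set \<Rightarrow> real" where
  "mu A = measure coin A"

definition Nbhd :: "bool list \<Rightarrow> (nat \<Rightarrow> bool) set" where
  "Nbhd s = {x. \<forall>i<length s. x i = s ! i}"

definition restr :: "(nat \<Rightarrow> bool) \<Rightarrow> nat \<Rightarrow> bool list" where
  "restr z n = map z [0..<n]"

definition vietoris :: "'a topology \<Rightarrow> 'a set topology" where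
  "vietoris X = topology_generated_by
     ({{K. compactin X K \<and> K \<subseteq> U} | U. openin X U} \<union>
      {{K. compactin X K \<and> K \<inter> U \<noteq> {}} | U. openin X U})"

fun sigma0 :: "'a topology \<Rightarrow> nat \<Rightarrow> 'a set set" where
  "sigma0 X 0 = {}"
| "sigma0 X (Suc 0) = Collect (openin X)"
| "sigma0 X (Suc (Suc n)) =
     {\<Union> (range f) | f. \<forall>i::nat. f i \<in> {topspace X - A | A. A \<in> sigma0 X (Suc n)}}"

definition pi0 :: "'a topology \<Rightarrow> nat \<Rightarrow> 'a set set" where
  "pi0 X n = {topspace X - A | A. A \<in> sigma0 X n}"

definition unit_iv :: "real topology" where
  "unit_iv = subtopology euclideanreal {0..1}"

definition spaceA :: "((nat \<Rightarrow> bool) set \<times> (nat \<Rightarrow> bool) \<times> nat \<times> real) topology" where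
  "spaceA = prod_topology (vietoris cantor)
      (prod_topology cantor (prod_topology (discrete_topology UNIV) unit_iv))"

definition spaceB :: "((nat \<Rightarrow> bool) set \<times> (nat \<Rightarrow> bool) \<times> real) topology" where
  "spaceB = prod_topology (vietoris cantor) (prod_topology cantor unit_iv)"

definition setA :: "(real \<Rightarrow> real \<Rightarrow> bool) \<Rightarrow> ((nat \<Rightarrow> bool) set \<times> (nat \<Rightarrow> bool) \<times> nat \<times> real) set" where
  "setA R = {(K, z, n, r). (K, z, n, r) \<in> topspace spaceA \<and> R (mu (K \<inter> Nbhd (restr z n))) r}"

definition ratio :: "(nat \<Rightarrow> bool) set \<Rightarrow> (nat \<Rightarrow> bool) \<Rightarrow> nat \<Rightarrow> real" where
  "ratio K z n = mu (K \<inter> Nbhd (restr z n)) / mu (Nbhd (restr z n))"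

definition Dplus :: "(nat \<Rightarrow> bool) set \<Rightarrow> (nat \<Rightarrow> bool) \<Rightarrow> ereal" where
  "Dplus K z = limsup (\<lambda>n. ereal (ratio K z n))"

definition Dminus :: "(nat \<Rightarrow> bool) set \<Rightarrow> (nat \<Rightarrow> bool) \<Rightarrow> ereal" where
  "Dminus K z = liminf (\<lambda>n. ereal (ratio K z n))"

definition setBplus :: "(ereal \<Rightarrow> ereal \<Rightarrow> bool) \<Rightarrow> ((nat \<Rightarrow> bool) set \<times> (nat \<Rightarrow> bool) \<times> real) set" where
  "setBplus R = {(K, z, r). (K, z, r) \<in> topspace spaceB \<and> R (Dplus K z) (ereal r)}"

definition setBminus :: "(ereal \<Rightarrow> ereal \<Rightarrow> bool) \<Rightarrow> ((nat \<Rightarrow> bool) set \<times> (nat \<Rightarrow> bool) \<times> real) set" where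
  "setBminus R = {(K, z, r). (K, z, r) \<in> topspace spaceB \<and> R (Dminus K z) (ereal r)}"

end

theory Submission
  imports Defs
begin


lemma sigma0_sub: "A \<in> sigma0 X n \<Longrightarrow> A \<subseteq> topspace X"
proof (induction X n arbitrary: A rule: sigma0.induct)
  case (2 X) then show ?case by (auto dest: openin_subset)
next
  case (3 X n) then show ?case by auto
qed auto

lemma sigma0_SS: "sigma0 X (Suc (Suc n)) = {\<Union> (range f) | f. \<forall>i::nat. f i \<in> pi0 X (Suc n)}"
  by (simp add: pi0_def)

lemma top_empty_sigma: "topspace X \<in> sigma0 X (Suc n) \<and> {} \<in> sigma0 X (Suc n)"
proof (induction n)
  case 0 then show ?case by auto
next
  case (Suc n)
  have "topspace X = \<Union> (range (\<lambda>_::nat. topspace X - {}))" by simp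
  moreover have "{} = \<Union> (range (\<lambda>_::nat. topspace X - topspace X))" by simp
  ultimately show ?case using Suc unfolding sigma0_SS pi0_def by blast
qed

lemma empty_pi: "{} \<in> pi0 X (Suc n)"
  unfolding pi0_def using top_empty_sigma[of X n] by blast

lemma sigma_Union:
  assumes "countable I" "\<And>i. i \<in> I \<Longrightarrow> g i \<in> pi0 X (Suc n)"
  shows "\<Union>(g ` I) \<in> sigma0 X (Suc (Suc n))"
proof (cases "I = {}")
  case True
  have "\<Union>(g ` I) = \<Union> (range (\<lambda>_::nat. {}))" using True by simp
  then show ?thesis unfolding sigma0_SS using empty_pi by blast
next
  case False
  have "\<Union>(g ` I) = \<Union> (range (\<lambda>k. g (from_nat_into I k)))"
    using False assms(1) by (metis image_image range_from_nat_into)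
  moreover have "\<forall>k. g (from_nat_into I k) \<in> pi0 X (Suc n)"
    using False assms by (simp add: from_nat_into)
  ultimately show ?thesis unfolding sigma0_SS by blast
qed

lemma pi_Inter:
  assumes "countable I" "\<And>i. i \<in> I \<Longrightarrow> S i \<in> sigma0 X (Suc n)"
  shows "topspace X \<inter> \<Inter>(S ` I) \<in> pi0 X (Suc (Suc n))"
proof -
  have "topspace X \<inter> \<Inter>(S ` I) = topspace X - \<Union>((\<lambda>i. topspace X - S i) ` I)" by auto
  moreover have "\<Union>((\<lambda>i. topspace X - S i) ` I) \<in> sigma0 X (Suc (Suc n))"
    by (rule sigma_Union) (use assms in \<open>auto simp: pi0_def\<close>)
  ultimately show ?thesis unfolding pi0_def by blast
qed

lemma sigma_Un:
  assumes "A \<in> sigma0 X (Suc (Suc n))" "B \<in> sigma0 X (Suc (Suc n))"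
  shows "A \<union> B \<in> sigma0 X (Suc (Suc n))"
proof -
  obtain f g :: "nat \<Rightarrow> 'a set" where f: "A = \<Union>(range f)" "\<forall>i. f i \<in> pi0 X (Suc n)"
    and g: "B = \<Union>(range g)" "\<forall>i. g i \<in> pi0 X (Suc n)"
    using assms unfolding sigma0_SS by blast
  have "A \<union> B = \<Union>((case_sum f g) ` (UNIV :: (nat + nat) set))"
    using f g by (simp add: UNIV_sum image_Un image_image)
  moreover have "\<Union>((case_sum f g) ` (UNIV :: (nat + nat) set)) \<in> sigma0 X (Suc (Suc n))"
    by (rule sigma_Union) (use f g in \<open>auto split: sum.splits\<close>)
  ultimately show ?thesis by simp
qed

lemma pi_Int:
  assumes "A \<in> pi0 X (Suc (Suc n))" "B \<in> pi0 X (Suc (Suc n))"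
  shows "A \<inter> B \<in> pi0 X (Suc (Suc n))"
proof -
  obtain A' B' where "A = topspace X - A'" "B = topspace X - B'"
    "A' \<in> sigma0 X (Suc (Suc n))" "B' \<in> sigma0 X (Suc (Suc n))"
    using assms unfolding pi0_def by blast
  then show ?thesis unfolding pi0_def using sigma_Un by blast
qed

lemma pi_sigma: "A \<in> pi0 X (Suc n) \<Longrightarrow> A \<in> sigma0 X (Suc (Suc n))"
  using sigma_Union[of "{()}" "\<lambda>_. A" X n] by simp

lemma pi1_closed: "pi0 X (Suc 0) = Collect (closedin X)"
  unfolding pi0_def by (auto simp: closedin_def) (metis Diff_Diff_Int inf.absorb_iff2)

lemma closed_sigma2: "closedin X A \<Longrightarrow> A \<in> sigma0 X (Suc (Suc 0))"
  using pi_sigma pi1_closed by blast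

lemma compl_pi: "A \<in> sigma0 X n \<Longrightarrow> topspace X - A \<in> pi0 X n"
  unfolding pi0_def by blast



lemma top_cantor[simp]: "topspace cantor = UNIV"
  unfolding cantor_def by (simp add: PiE_UNIV_domain)

lemma restr_eq_iff: "restr x j = t \<longleftrightarrow> length t = j \<and> (\<forall>i<j. x i = t ! i)"
  unfolding restr_def by (auto simp: list_eq_iff_nth_eq)

lemma nth_restr[simp]: "i < j \<Longrightarrow> restr x j ! i = x i"
  by (simp add: restr_def)

lemma length_restr[simp]: "length (restr x j) = j"
  by (simp add: restr_def)

lemma restr_take: "m \<le> n \<Longrightarrow> restr x m = take m (restr x n)"
  unfolding restr_def by (simp add: take_map)

lemma open_restr1: "openin cantor {x. restr x j = t}"
proof (cases "length t = j")
  case True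
  have eq: "{x. restr x j = t} = PiE UNIV (\<lambda>i. if i < j then {t ! i} else UNIV)"
    using True by (auto simp: restr_eq_iff PiE_def Pi_def extensional_def)
  have fin: "finite {i \<in> UNIV. (if i < j then {t ! i} else UNIV) \<noteq> topspace (discrete_topology (UNIV::bool set))}"
    by (rule finite_subset[of _ "{..<j}"]) auto
  show ?thesis unfolding eq cantor_def
    by (subst openin_PiE_gen) (use fin in auto)
next
  case False
  then have "{x. restr x j = t} = {}" by (auto simp: restr_eq_iff)
  then show ?thesis by simp
qed

lemma open_restr: "openin cantor {x. restr x j \<in> T}"
proof -
  have "{x. restr x j \<in> T} = \<Union>((\<lambda>t. {x. restr x j = t}) ` T)" by auto
  then show ?thesis using open_restr1 by auto
qed

lemma Nbhd_restr: "Nbhd s = {x. restr x (length s) = s}"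
  unfolding Nbhd_def by (auto simp: restr_eq_iff)

lemma space_coin[simp]: "space coin = UNIV"
  unfolding coin_def by (simp add: space_PiM PiE_UNIV_domain)

lemma prob_coin: "prob_space coin"
  unfolding coin_def by (rule prob_space_PiM) (simp add: prob_space_measure_pmf)

lemma coord_sets: "{x. x i = b} \<in> sets coin"
proof -
  have "(\<lambda>x. x i) \<in> measurable coin (measure_pmf (bernoulli_pmf (1/2)))"
    unfolding coin_def by (rule measurable_component_singleton) simp
  from measurable_sets[OF this, of "{b}"] show ?thesis by (simp add: vimage_def)
qed

lemma restr_sets: "{x. restr x j \<in> T} \<in> sets coin"
proof (induction j arbitrary: T)
  case 0
  have "UNIV \<in> sets coin" using sets.top[of coin] by simp
  then show ?case by (cases "[] \<in> T") (auto simp: restr_def)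
next
  case (Suc j)
  have eq: "{x. restr x (Suc j) \<in> T} =
     ({x. restr x j \<in> {t. t @ [True] \<in> T}} \<inter> {x. x j = True}) \<union>
     ({x. restr x j \<in> {t. t @ [False] \<in> T}} \<inter> {x. x j = False})"
    by (rule set_eqI) (case_tac "x j"; auto simp: restr_def)
  have a: "{x. restr x j \<in> {t. t @ [True] \<in> T}} \<in> sets coin" using Suc.IH[of "{t. t @ [True] \<in> T}"] .
  have b: "{x. restr x j \<in> {t. t @ [False] \<in> T}} \<in> sets coin" using Suc.IH[of "{t. t @ [False] \<in> T}"] .
  show ?case unfolding eq by (intro sets.Un sets.Int a b coord_sets)
qed

lemma Nbhd_sets: "Nbhd s \<in> sets coin"
  using restr_sets[of "length s" "{s}"] by (simp add: Nbhd_restr)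

definition tr :: "nat \<Rightarrow> (nat \<Rightarrow> bool) set \<Rightarrow> bool list set" where
  "tr j K = (\<lambda>x. restr x j) ` K"

definition ap :: "nat \<Rightarrow> bool list set \<Rightarrow> bool list \<Rightarrow> real" where
  "ap j T s = mu ({x. restr x j \<in> T} \<inter> Nbhd s)"

lemma closed_sep:
  assumes "closedin cantor K" "x \<notin> K"
  shows "\<exists>j. \<forall>y. restr y j = restr x j \<longrightarrow> y \<notin> K"
proof -
  have "openin cantor (- K)" using assms(1) by (simp add: closedin_def Compl_eq_Diff_UNIV)
  then have "\<forall>x \<in> - K. \<exists>U. finite {i \<in> UNIV. U i \<noteq> topspace(discrete_topology (UNIV::bool set))} \<and>
                 (\<forall>i \<in> UNIV. openin (discrete_topology UNIV) (U i)) \<and> x \<in> PiE UNIV U \<and> PiE UNIV U \<subseteq> - K"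
    unfolding cantor_def by (rule iffD1[OF openin_product_topology_alt])
  then have "\<exists>U. finite {i. U i \<noteq> UNIV} \<and> x \<in> PiE UNIV U \<and> PiE UNIV U \<subseteq> - K"
    using assms(2) by simp
  then obtain U where U: "finite {i. U i \<noteq> UNIV}" "x \<in> PiE UNIV U" "PiE UNIV U \<subseteq> - K"
    by blast
  define j where "j = Suc (Max (insert 0 {i. U i \<noteq> UNIV}))"
  have lt: "U i \<noteq> UNIV \<Longrightarrow> i < j" for i
    using U(1) unfolding j_def by (simp add: le_imp_less_Suc)
  show ?thesis
  proof (intro exI allI impI)
    fix y assume "restr y j = restr x j"
    then have "\<forall>i<j. y i = x i" by (simp add: restr_eq_iff)
    then have yx: "\<forall>i<j. y i = x i" .
    have xU: "x i \<in> U i" for i using U(2) by (auto simp: PiE_def Pi_def)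
    have "y i \<in> U i" for i
    proof (cases "U i = UNIV")
      case False
      then have "i < j" by (rule lt)
      then show ?thesis using yx xU by simp
    qed simp
    then have "y \<in> PiE UNIV U" by (auto simp: PiE_def Pi_def)
    then show "y \<notin> K" using U(3) by auto
  qed
qed

lemma KEY:
  assumes "closedin cantor K"
  shows "mu (K \<inter> Nbhd s) < c \<longleftrightarrow> (\<exists>j. ap j (tr j K) s < c)"
proof -
  interpret prob_space coin by (rule prob_coin)
  define A where "A j = {x. restr x j \<in> tr j K} \<inter> Nbhd s" for j
  have Asets: "A j \<in> sets coin" for j
    unfolding A_def using restr_sets Nbhd_sets by auto
  have sub: "K \<inter> Nbhd s \<subseteq> A j" for j
    unfolding A_def tr_def by auto
  have dec: "decseq A"
  proof (rule decseq_SucI)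
    fix j show "A (Suc j) \<subseteq> A j"
      unfolding A_def tr_def
      by (auto simp: restr_take[of j "Suc j"])
  qed
  have inter: "(\<Inter>j. A j) = K \<inter> Nbhd s"
  proof
    show "(\<Inter>j. A j) \<subseteq> K \<inter> Nbhd s"
    proof
      fix x assume x: "x \<in> (\<Inter>j. A j)"
      have "x \<in> K"
      proof (rule ccontr)
        assume "x \<notin> K"
        then obtain j where "\<forall>y. restr y j = restr x j \<longrightarrow> y \<notin> K"
          using closed_sep assms by blast
        moreover have "x \<in> A j" using x by auto
        ultimately show False unfolding A_def tr_def by auto
      qed
      moreover have "x \<in> Nbhd s" using x A_def by auto
      ultimately show "x \<in> K \<inter> Nbhd s" by auto
    qed
  qed (use sub in auto)
  have lim: "(\<lambda>j. measure coin (A j)) \<longlonglongrightarrow> measure coin (K \<inter> Nbhd s)"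
    using finite_Lim_measure_decseq[of A] Asets dec inter by auto
  have apA: "ap j (tr j K) s = measure coin (A j)" for j
    unfolding ap_def A_def mu_def by simp
  show ?thesis
  proof
    assume "mu (K \<inter> Nbhd s) < c"
    then have "eventually (\<lambda>j. measure coin (A j) < c) sequentially"
      using lim unfolding mu_def by (rule order_tendstoD(2)[rotated])
    then show "\<exists>j. ap j (tr j K) s < c" using apA by (auto simp: eventually_sequentially)
  next
    assume "\<exists>j. ap j (tr j K) s < c"
    then obtain j where "measure coin (A j) < c" using apA by auto
    moreover have "mu (K \<inter> Nbhd s) \<le> measure coin (A j)"
      unfolding mu_def by (rule finite_measure_mono[OF sub Asets])
    ultimately show "mu (K \<inter> Nbhd s) < c" by simp
  qed
qed



lemma topV: "topspace (vietoris cantor) = {K. compactin cantor K}"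
proof -
  have o: "openin cantor UNIV" using openin_topspace[of cantor] by simp
  let ?S = "{{K. compactin cantor K \<and> K \<subseteq> U} | U. openin cantor U} \<union>
      {{K. compactin cantor K \<and> K \<inter> U \<noteq> {}} | U. openin cantor U}"
  have e: "{K. compactin cantor K \<and> K \<subseteq> UNIV} \<in> ?S" using o by blast
  have "\<Union>?S \<subseteq> {K. compactin cantor K}" by auto
  moreover have "{K. compactin cantor K} \<subseteq> \<Union>?S"
  proof
    fix K assume "K \<in> {K. compactin cantor K}"
    then have "K \<in> {K. compactin cantor K \<and> K \<subseteq> UNIV}" by simp
    then show "K \<in> \<Union>?S" using e by (rule UnionI[rotated])
  qed
  ultimately have "\<Union>?S = {K. compactin cantor K}" by (rule subset_antisym)
  then show ?thesis unfolding vietoris_def topology_generated_by_topspace .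
qed

lemma openin_cantor_UNIV[simp]: "openin cantor UNIV"
  using openin_topspace[of cantor] by simp

lemma fiber_open: "openin (vietoris cantor) {K \<in> topspace (vietoris cantor). tr j K = T}"
proof (cases "T \<subseteq> {t. length t = j}")
  case True
  have fin: "finite T"
    using finite_lists_length_eq[of "UNIV::bool set" j] True by (auto intro: finite_subset)
  let ?A = "{K. compactin cantor K \<and> K \<subseteq> {x. restr x j \<in> T}}"
  let ?B = "\<lambda>t. {K. compactin cantor K \<and> K \<inter> {x. restr x j = t} \<noteq> {}}"
  have eq: "{K \<in> topspace (vietoris cantor). tr j K = T} = \<Inter>(insert ?A (?B ` T))"
    unfolding topV tr_def by auto
  have oA: "openin (vietoris cantor) ?A"
    unfolding vietoris_def by (rule topology_generated_by_Basis) (use open_restr in blast)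
  have oB: "openin (vietoris cantor) (?B t)" for t
    unfolding vietoris_def by (rule topology_generated_by_Basis) (use open_restr1 in blast)
  show ?thesis unfolding eq
    by (rule openin_Inter) (use fin oA oB in auto)
next
  case False
  then have e: "{K \<in> topspace (vietoris cantor). tr j K = T} = {}"
    unfolding tr_def by auto
  show ?thesis unfolding e by (rule openin_empty)
qed

lemma loc_open:
  assumes "\<And>y. openin X {x \<in> topspace X. \<phi> x = y}"
  shows "openin X {x \<in> topspace X. \<phi> x \<in> P}"
proof -
  have "{x \<in> topspace X. \<phi> x \<in> P} = \<Union>((\<lambda>y. {x \<in> topspace X. \<phi> x = y}) ` P)" by auto
  then show ?thesis using assms by auto
qed

lemma loc_closed:
  assumes "\<And>y. openin X {x \<in> topspace X. \<phi> x = y}"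
  shows "closedin X {x \<in> topspace X. \<phi> x \<in> P}"
proof -
  have "topspace X - {x \<in> topspace X. \<phi> x \<in> P} = {x \<in> topspace X. \<phi> x \<in> -P}" by auto
  then show ?thesis using loc_open[OF assms, of "-P"] by (simp add: closedin_def)
qed

lemma top_unit[simp]: "topspace unit_iv = {0..1}"
  by (simp add: unit_iv_def)

lemma topA: "topspace spaceA = topspace (vietoris cantor) \<times> UNIV \<times> UNIV \<times> {0..1}"
  by (simp add: spaceA_def)

lemma topB: "topspace spaceB = topspace (vietoris cantor) \<times> UNIV \<times> {0..1}"
  by (simp add: spaceB_def)

definition phiA where "phiA j p = (tr j (fst p), restr (fst (snd p)) (fst (snd (snd p))))"
definition phiB where "phiB j n p = (tr j (fst p), restr (fst (snd p)) n)"
definition rA :: "((nat \<Rightarrow> bool) set \<times> (nat \<Rightarrow> bool) \<times> nat \<times> real) \<Rightarrow> real"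
  where "rA p = snd (snd (snd p))"
definition rB :: "((nat \<Rightarrow> bool) set \<times> (nat \<Rightarrow> bool) \<times> real) \<Rightarrow> real"
  where "rB p = snd (snd p)"

lemma phiA_fiber: "openin spaceA {p \<in> topspace spaceA. phiA j p = y}"
proof -
  obtain T s where y: "y = (T, s)" by force
  have "{p \<in> topspace spaceA. phiA j p = y} =
    {K \<in> topspace (vietoris cantor). tr j K = T} \<times> ({z. restr z (length s) = s} \<times> ({length s} \<times> {0..1}))"
    unfolding topA phiA_def y by (auto simp: restr_eq_iff)
  moreover have "openin spaceA \<dots>"
    unfolding spaceA_def
    by (simp add: openin_prod_Times_iff fiber_open open_restr1 unit_iv_def)
  ultimately show ?thesis by simp
qed

lemma phiB_fiber: "openin spaceB {p \<in> topspace spaceB. phiB j n p = y}"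
proof -
  obtain T s where y: "y = (T, s)" by force
  have "{p \<in> topspace spaceB. phiB j n p = y} =
    {K \<in> topspace (vietoris cantor). tr j K = T} \<times> ({z. restr z n = s} \<times> {0..1})"
    unfolding topB phiB_def y by auto
  moreover have "openin spaceB \<dots>"
    unfolding spaceB_def
    by (simp add: openin_prod_Times_iff fiber_open open_restr1 unit_iv_def)
  ultimately show ?thesis by simp
qed

lemma rA_open: "open W \<Longrightarrow> openin spaceA {p \<in> topspace spaceA. rA p \<in> W}"
proof -
  assume W: "open W"
  have "{p \<in> topspace spaceA. rA p \<in> W} =
     topspace (vietoris cantor) \<times> (UNIV \<times> (UNIV \<times> ({0..1} \<inter> W)))"
    unfolding topA rA_def by auto
  moreover have "openin unit_iv ({0..1} \<inter> W)"
    unfolding unit_iv_def by (rule openin_subtopology_Int2) (use W in simp)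
  ultimately show ?thesis unfolding spaceA_def
    by (simp add: openin_prod_Times_iff)
qed

lemma rB_open: "open W \<Longrightarrow> openin spaceB {p \<in> topspace spaceB. rB p \<in> W}"
proof -
  assume W: "open W"
  have "{p \<in> topspace spaceB. rB p \<in> W} =
     topspace (vietoris cantor) \<times> (UNIV \<times> ({0..1} \<inter> W))"
    unfolding topB rB_def by auto
  moreover have "openin unit_iv ({0..1} \<inter> W)"
    unfolding unit_iv_def by (rule openin_subtopology_Int2) (use W in simp)
  ultimately show ?thesis unfolding spaceB_def
    by (simp add: openin_prod_Times_iff)
qed

lemma rA_closed: "closed C \<Longrightarrow> closedin spaceA {p \<in> topspace spaceA. rA p \<in> C}"
proof -
  assume "closed C"
  then have "openin spaceA {p \<in> topspace spaceA. rA p \<in> -C}" by (intro rA_open) auto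
  moreover have "topspace spaceA - {p \<in> topspace spaceA. rA p \<in> C} = {p \<in> topspace spaceA. rA p \<in> -C}" by auto
  ultimately show ?thesis by (simp add: closedin_def)
qed

lemma rB_closed: "closed C \<Longrightarrow> closedin spaceB {p \<in> topspace spaceB. rB p \<in> C}"
proof -
  assume "closed C"
  then have "openin spaceB {p \<in> topspace spaceB. rB p \<in> -C}" by (intro rB_open) auto
  moreover have "topspace spaceB - {p \<in> topspace spaceB. rB p \<in> C} = {p \<in> topspace spaceB. rB p \<in> -C}" by auto
  ultimately show ?thesis by (simp add: closedin_def)
qed

lemma Hausdorff_cantor: "Hausdorff_space cantor"
  unfolding cantor_def by (simp add: Hausdorff_space_product_topology Hausdorff_space_discrete_topology)

lemma topV_closed: "K \<in> topspace (vietoris cantor) \<Longrightarrow> closedin cantor K"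
  unfolding topV using compactin_imp_closedin[OF Hausdorff_cantor] by auto



lemma S1: "ereal r < liminf (\<lambda>n. ereal (a n)) \<longleftrightarrow>
  (\<exists>q1\<in>\<rat>. \<exists>q2\<in>\<rat>. r \<le> q1 \<and> q1 < q2 \<and> (\<exists>m. \<forall>n\<ge>m. q2 \<le> a n))"
proof
  assume h: "ereal r < liminf (\<lambda>n. ereal (a n))"
  obtain x where x: "ereal r < ereal x" "ereal x < liminf (\<lambda>n. ereal (a n))"
    using ereal_dense2[OF h] by blast
  obtain q1 where q1: "q1 \<in> \<rat>" "r < q1" "q1 < x" using Rats_dense_in_real[of r x] x by auto
  obtain q2 where q2: "q2 \<in> \<rat>" "q1 < q2" "q2 < x" using Rats_dense_in_real[of q1 x] q1 by auto
  have "ereal q2 < ereal x" using q2 by simp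
  then have "ereal q2 < liminf (\<lambda>n. ereal (a n))" using x(2) by (rule order.strict_trans)
  then have "eventually (\<lambda>n. ereal q2 < ereal (a n)) sequentially" by (rule less_LiminfD)
  then obtain m where "\<forall>n\<ge>m. q2 < a n" by (auto simp: eventually_sequentially)
  then show "\<exists>q1\<in>\<rat>. \<exists>q2\<in>\<rat>. r \<le> q1 \<and> q1 < q2 \<and> (\<exists>m. \<forall>n\<ge>m. q2 \<le> a n)"
    using q1 q2 by (meson less_imp_le)
next
  assume "\<exists>q1\<in>\<rat>. \<exists>q2\<in>\<rat>. r \<le> q1 \<and> q1 < q2 \<and> (\<exists>m. \<forall>n\<ge>m. q2 \<le> a n)"
  then obtain q1 q2 m where h: "r \<le> q1" "q1 < q2" "\<forall>n\<ge>m. q2 \<le> a n" by blast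
  have "eventually (\<lambda>n. ereal q2 \<le> ereal (a n)) sequentially"
    using h(3) by (auto simp: eventually_sequentially)
  then have "ereal q2 \<le> liminf (\<lambda>n. ereal (a n))" by (rule Liminf_bounded)
    then show "ereal r < liminf (\<lambda>n. ereal (a n))" using h
      using order.strict_trans2[of "ereal r" "ereal q2"] by simp
qed

lemma S2a: "liminf (\<lambda>n. ereal (a n)) < ereal r \<longleftrightarrow>
  (\<exists>q\<in>\<rat>. q < r \<and> (\<forall>m. \<exists>n\<ge>m. a n < q))"
proof
  assume h: "liminf (\<lambda>n. ereal (a n)) < ereal r"
  obtain x where x: "liminf (\<lambda>n. ereal (a n)) < ereal x" "ereal x < ereal r"
    using ereal_dense2[OF h] by blast
  obtain q where q: "q \<in> \<rat>" "x < q" "q < r" using Rats_dense_in_real[of x r] x by auto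
  have "ereal x < ereal q" using q by simp
  with x(1) have L: "liminf (\<lambda>n. ereal (a n)) < ereal q" by (rule order.strict_trans)
  have "\<forall>m. \<exists>n\<ge>m. a n < q"
  proof (rule ccontr)
    assume "\<not> (\<forall>m. \<exists>n\<ge>m. a n < q)"
    then obtain m where "\<forall>n\<ge>m. q \<le> a n" by (auto simp: not_less)
    then have "eventually (\<lambda>n. ereal q \<le> ereal (a n)) sequentially"
      by (auto simp: eventually_sequentially)
    then have "ereal q \<le> liminf (\<lambda>n. ereal (a n))" by (rule Liminf_bounded)
    then show False using L by simp
  qed
  then show "\<exists>q\<in>\<rat>. q < r \<and> (\<forall>m. \<exists>n\<ge>m. a n < q)" using q by blast
next
  assume "\<exists>q\<in>\<rat>. q < r \<and> (\<forall>m. \<exists>n\<ge>m. a n < q)"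
  then obtain q where h: "q < r" "\<forall>m. \<exists>n\<ge>m. a n < q" by blast
  have "liminf (\<lambda>n. ereal (a n)) \<le> ereal q"
  proof (rule ccontr)
    assume "\<not> liminf (\<lambda>n. ereal (a n)) \<le> ereal q"
    then have "ereal q < liminf (\<lambda>n. ereal (a n))" by simp
    then have "eventually (\<lambda>n. ereal q < ereal (a n)) sequentially" by (rule less_LiminfD)
    then obtain m where "\<forall>n\<ge>m. q < a n" by (auto simp: eventually_sequentially)
    then show False using h(2) by (meson less_asym)
  qed
  then show "liminf (\<lambda>n. ereal (a n)) < ereal r" using h(1)
    using order.strict_trans1[of _ "ereal q" "ereal r"] by simp
qed

lemma S2b: "liminf (\<lambda>n. ereal (a n)) < ereal r \<longleftrightarrow>
  (\<exists>q1\<in>\<rat>. \<exists>q2\<in>\<rat>. q1 < q2 \<and> q2 \<le> r \<and> (\<forall>m. \<exists>n\<ge>m. a n < q1))"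
proof
  assume "liminf (\<lambda>n. ereal (a n)) < ereal r"
  then obtain q where q: "q \<in> \<rat>" "q < r" "\<forall>m. \<exists>n\<ge>m. a n < q" using S2a by blast
  obtain q2 where "q2 \<in> \<rat>" "q < q2" "q2 < r" using Rats_dense_in_real[of q r] q by auto
  then show "\<exists>q1\<in>\<rat>. \<exists>q2\<in>\<rat>. q1 < q2 \<and> q2 \<le> r \<and> (\<forall>m. \<exists>n\<ge>m. a n < q1)"
    using q by (meson less_imp_le)
next
  assume "\<exists>q1\<in>\<rat>. \<exists>q2\<in>\<rat>. q1 < q2 \<and> q2 \<le> r \<and> (\<forall>m. \<exists>n\<ge>m. a n < q1)"
  then obtain q1 where "q1 \<in> \<rat>" "q1 < r" "\<forall>m. \<exists>n\<ge>m. a n < q1" by force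
  then show "liminf (\<lambda>n. ereal (a n)) < ereal r" using S2a by blast
qed

lemma S3: "limsup (\<lambda>n. ereal (a n)) < ereal r \<longleftrightarrow>
  (\<exists>q\<in>\<rat>. q < r \<and> (\<exists>m. \<forall>n\<ge>m. a n < q))"
proof
  assume h: "limsup (\<lambda>n. ereal (a n)) < ereal r"
  obtain x where x: "limsup (\<lambda>n. ereal (a n)) < ereal x" "ereal x < ereal r"
    using ereal_dense2[OF h] by blast
  obtain q where q: "q \<in> \<rat>" "x < q" "q < r" using Rats_dense_in_real[of x r] x by auto
  have "ereal x < ereal q" using q by simp
  with x(1) have L: "limsup (\<lambda>n. ereal (a n)) < ereal q" by (rule order.strict_trans)
  then have "eventually (\<lambda>n. ereal (a n) < ereal q) sequentially" by (rule Limsup_lessD)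
  then obtain m where "\<forall>n\<ge>m. a n < q" by (auto simp: eventually_sequentially)
  then show "\<exists>q\<in>\<rat>. q < r \<and> (\<exists>m. \<forall>n\<ge>m. a n < q)" using q by blast
next
  assume "\<exists>q\<in>\<rat>. q < r \<and> (\<exists>m. \<forall>n\<ge>m. a n < q)"
  then obtain q m where h: "q < r" "\<forall>n\<ge>m. a n < q" by blast
  have "eventually (\<lambda>n. ereal (a n) \<le> ereal q) sequentially"
    using h(2) unfolding eventually_sequentially by (auto intro!: exI[of _ m] less_imp_le)
  then have "limsup (\<lambda>n. ereal (a n)) \<le> ereal q" by (rule Limsup_bounded)
  then show "limsup (\<lambda>n. ereal (a n)) < ereal r" using h(1)
    using order.strict_trans1[of _ "ereal q" "ereal r"] by simp
qed

lemma S4: "ereal r < limsup (\<lambda>n. ereal (a n)) \<longleftrightarrow>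
  (\<exists>q1\<in>\<rat>. \<exists>q2\<in>\<rat>. r \<le> q1 \<and> q1 < q2 \<and> (\<forall>m. \<exists>n\<ge>m. q2 \<le> a n))"
proof
  assume h: "ereal r < limsup (\<lambda>n. ereal (a n))"
  obtain x where x: "ereal r < ereal x" "ereal x < limsup (\<lambda>n. ereal (a n))"
    using ereal_dense2[OF h] by blast
  obtain q1 where q1: "q1 \<in> \<rat>" "r < q1" "q1 < x" using Rats_dense_in_real[of r x] x by auto
  obtain q2 where q2: "q2 \<in> \<rat>" "q1 < q2" "q2 < x" using Rats_dense_in_real[of q1 x] q1 by auto
  have "\<forall>m. \<exists>n\<ge>m. q2 \<le> a n"
  proof (rule ccontr)
    assume "\<not> (\<forall>m. \<exists>n\<ge>m. q2 \<le> a n)"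
    then obtain m where "\<forall>n\<ge>m. a n < q2" by (metis not_le)
    then have "eventually (\<lambda>n. ereal (a n) \<le> ereal q2) sequentially"
      unfolding eventually_sequentially by (auto intro!: exI[of _ m] less_imp_le)
    then have "limsup (\<lambda>n. ereal (a n)) \<le> ereal q2" by (rule Limsup_bounded)
    then have "limsup (\<lambda>n. ereal (a n)) < ereal x" using q2 order.strict_trans1[of _ "ereal q2" "ereal x"] by simp
    then show False using x(2) by simp
  qed
  then show "\<exists>q1\<in>\<rat>. \<exists>q2\<in>\<rat>. r \<le> q1 \<and> q1 < q2 \<and> (\<forall>m. \<exists>n\<ge>m. q2 \<le> a n)"
    using q1 q2 by (meson less_imp_le)
next
  assume "\<exists>q1\<in>\<rat>. \<exists>q2\<in>\<rat>. r \<le> q1 \<and> q1 < q2 \<and> (\<forall>m. \<exists>n\<ge>m. q2 \<le> a n)"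
  then obtain q1 q2 where h: "r \<le> q1" "q1 < q2" "\<forall>m. \<exists>n\<ge>m. q2 \<le> a n" by blast
  have "ereal q1 < limsup (\<lambda>n. ereal (a n))"
  proof (rule ccontr)
    assume "\<not> ereal q1 < limsup (\<lambda>n. ereal (a n))"
    then have "limsup (\<lambda>n. ereal (a n)) < ereal q2" using h(2)
      using order.strict_trans1[of _ "ereal q1" "ereal q2"] by (simp add: not_less)
    then have "eventually (\<lambda>n. ereal (a n) < ereal q2) sequentially" by (rule Limsup_lessD)
    then obtain m where "\<forall>n\<ge>m. a n < q2" by (auto simp: eventually_sequentially)
    then show False using h(3) by (meson not_less)
  qed
  then show "ereal r < limsup (\<lambda>n. ereal (a n))" using h(1)
    using order.strict_trans1[of "ereal r" "ereal q1"] by simp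
qed



definition LA where "LA j P = {p \<in> topspace spaceA. phiA j p \<in> P}"
definition RA where "RA W = {p \<in> topspace spaceA. rA p \<in> W}"
definition LB where "LB j n P = {p \<in> topspace spaceB. phiB j n p \<in> P}"
definition RB where "RB W = {p \<in> topspace spaceB. rB p \<in> W}"

lemma LA_open: "openin spaceA (LA j P)"
  unfolding LA_def by (rule loc_open[OF phiA_fiber])
lemma LA_closed: "closedin spaceA (LA j P)"
  unfolding LA_def by (rule loc_closed[OF phiA_fiber])
lemma LB_open: "openin spaceB (LB j n P)"
  unfolding LB_def by (rule loc_open[OF phiB_fiber])
lemma LB_closed: "closedin spaceB (LB j n P)"
  unfolding LB_def by (rule loc_closed[OF phiB_fiber])
lemma RA_open: "open W \<Longrightarrow> openin spaceA (RA W)"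
  unfolding RA_def by (rule rA_open)
lemma RA_closed: "closed W \<Longrightarrow> closedin spaceA (RA W)"
  unfolding RA_def by (rule rA_closed)
lemma RB_open: "open W \<Longrightarrow> openin spaceB (RB W)"
  unfolding RB_def by (rule rB_open)
lemma RB_closed: "closed W \<Longrightarrow> closedin spaceB (RB W)"
  unfolding RB_def by (rule rB_closed)

lemma memtopA: "(K, z, n, r) \<in> topspace spaceA \<longleftrightarrow> K \<in> topspace (vietoris cantor) \<and> r \<in> {0..1}"
  by (simp add: topA)
lemma memtopB: "(K, z, r) \<in> topspace spaceB \<longleftrightarrow> K \<in> topspace (vietoris cantor) \<and> r \<in> {0..1}"
  by (simp add: topB)

lemma mem_LA: "(K, z, n, r) \<in> LA j P \<longleftrightarrow> (K, z, n, r) \<in> topspace spaceA \<and> (tr j K, restr z n) \<in> P"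
  by (simp add: LA_def phiA_def)
lemma mem_RA: "(K, z, n, r) \<in> RA W \<longleftrightarrow> (K, z, n, r) \<in> topspace spaceA \<and> r \<in> W"
  by (simp add: RA_def rA_def)
lemma mem_LB: "(K, z, r) \<in> LB j n P \<longleftrightarrow> (K, z, r) \<in> topspace spaceB \<and> (tr j K, restr z n) \<in> P"
  by (simp add: LB_def phiB_def)
lemma mem_RB: "(K, z, r) \<in> RB W \<longleftrightarrow> (K, z, r) \<in> topspace spaceB \<and> r \<in> W"
  by (simp add: RB_def rB_def)
lemma memA: "(K, z, n, r) \<in> setA R \<longleftrightarrow> (K, z, n, r) \<in> topspace spaceA \<and> R (mu (K \<inter> Nbhd (restr z n))) r"
  by (simp add: setA_def)
lemma memBp: "(K, z, r) \<in> setBplus R \<longleftrightarrow> (K, z, r) \<in> topspace spaceB \<and> R (Dplus K z) (ereal r)"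
  by (simp add: setBplus_def)
lemma memBm: "(K, z, r) \<in> setBminus R \<longleftrightarrow> (K, z, r) \<in> topspace spaceB \<and> R (Dminus K z) (ereal r)"
  by (simp add: setBminus_def)

lemma KEYA: "K \<in> topspace (vietoris cantor) \<Longrightarrow> mu (K \<inter> Nbhd s) < c \<longleftrightarrow> (\<exists>j. ap j (tr j K) s < c)"
  using KEY topV_closed by blast

lemma KEYA': "K \<in> topspace (vietoris cantor) \<Longrightarrow> c \<le> mu (K \<inter> Nbhd s) \<longleftrightarrow> (\<forall>j. c \<le> ap j (tr j K) s)"
  using KEYA by (meson not_less)

definition rap :: "nat \<Rightarrow> bool list set \<Rightarrow> bool list \<Rightarrow> real" where
  "rap j T s = ap j T s / mu (Nbhd s)"

lemma KEYB: assumes K: "K \<in> topspace (vietoris cantor)"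
  shows "ratio K z n < c \<longleftrightarrow> (\<exists>j. rap j (tr j K) (restr z n) < c)"
proof -
  let ?s = "restr z n"
  have m0: "mu (Nbhd ?s) \<ge> 0" unfolding mu_def by simp
  show ?thesis
  proof (cases "mu (Nbhd ?s) = 0")
    case True
    then show ?thesis unfolding ratio_def rap_def by simp
  next
    case False
    then have pos: "mu (Nbhd ?s) > 0" using m0 by simp
    have "ratio K z n < c \<longleftrightarrow> mu (K \<inter> Nbhd ?s) < c * mu (Nbhd ?s)"
      unfolding ratio_def using pos by (simp add: divide_less_eq)
    also have "\<dots> \<longleftrightarrow> (\<exists>j. ap j (tr j K) ?s < c * mu (Nbhd ?s))" by (rule KEYA[OF K])
    also have "\<dots> \<longleftrightarrow> (\<exists>j. rap j (tr j K) ?s < c)"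
      unfolding rap_def using pos by (simp add: divide_less_eq)
    finally show ?thesis .
  qed
qed

lemma KEYB': "K \<in> topspace (vietoris cantor) \<Longrightarrow> c \<le> ratio K z n \<longleftrightarrow> (\<forall>j. c \<le> rap j (tr j K) (restr z n))"
  using KEYB by (meson not_less)

lemma countQQ: "countable {(q1::real, q2::real). q1 \<in> \<rat> \<and> q2 \<in> \<rat> \<and> P q1 q2}"
  by (rule countable_subset[of _ "\<rat> \<times> \<rat>"]) (auto intro: countable_SIGMA countable_rat)

lemma countQQN: "countable {(q1::real, q2::real, m::nat). q1 \<in> \<rat> \<and> q2 \<in> \<rat> \<and> P q1 q2}"
  by (rule countable_subset[of _ "\<rat> \<times> \<rat> \<times> UNIV"]) (auto intro!: countable_SIGMA countable_rat)

lemma countNQQ: "countable {(j::nat, q1::real, q2::real). q1 \<in> \<rat> \<and> q2 \<in> \<rat> \<and> P q1 q2}"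
  by (rule countable_subset[of _ "UNIV \<times> \<rat> \<times> \<rat>"]) (auto intro!: countable_SIGMA countable_rat)

lemma countQN: "countable (\<rat> \<times> (UNIV :: nat set))"
  by (auto intro!: countable_SIGMA countable_rat)

lemma A_lt: "setA (<) \<in> sigma0 spaceA (Suc 0)"
proof -
  let ?F = "\<lambda>(j, q). LA j {(T, s). ap j T s < q} \<inter> RA {q<..}"
  have "p \<in> setA (<) \<longleftrightarrow> p \<in> \<Union>(?F ` UNIV)" for p
  proof -
    obtain K z n r where p: "p = (K, z, n, r)" by (metis prod_cases4)
    show ?thesis
    proof
      assume "p \<in> setA (<)"
      then have h: "K \<in> topspace (vietoris cantor)" "r \<in> {0..1}" "mu (K \<inter> Nbhd (restr z n)) < r"
        by (auto simp: p memA memtopA)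
      define q where "q = (mu (K \<inter> Nbhd (restr z n)) + r) / 2"
      have "mu (K \<inter> Nbhd (restr z n)) < q" "q < r" using h(3) by (auto simp: q_def)
      then obtain j where "ap j (tr j K) (restr z n) < q" "q < r" using KEYA[OF h(1)] by blast
      then have "p \<in> ?F (j, q)" using h by (auto simp: p mem_LA mem_RA memtopA)
      then show "p \<in> \<Union>(?F ` UNIV)" by blast
    next
      assume "p \<in> \<Union>(?F ` UNIV)"
      then obtain j q where "p \<in> ?F (j, q)" by auto
      then have h: "K \<in> topspace (vietoris cantor)" "r \<in> {0..1}" "ap j (tr j K) (restr z n) < q" "q < r"
        by (auto simp: p mem_LA mem_RA memtopA)
      then have "mu (K \<inter> Nbhd (restr z n)) < q" using KEYA[OF h(1)] by blast
      then show "p \<in> setA (<)" using h by (auto simp: p memA memtopA)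
    qed
  qed
  then have eq: "setA (<) = \<Union>(?F ` UNIV)" by blast
  have "openin spaceA (?F x)" for x
    by (cases x) (auto intro!: openin_Int LA_open RA_open)
  then have "openin spaceA (\<Union>(?F ` UNIV))" by (intro openin_Union) auto
  then show ?thesis unfolding eq by simp
qed

lemma A_lt2: "setA (<) \<in> sigma0 spaceA (Suc (Suc 0))"
proof -
  let ?I = "{(j::nat, q1::real, q2::real). q1 \<in> \<rat> \<and> q2 \<in> \<rat> \<and> q1 < q2}"
  let ?F = "\<lambda>(j, q1, q2). LA j {(T, s). ap j T s < q1} \<inter> RA {q2..}"
  have "p \<in> setA (<) \<longleftrightarrow> p \<in> \<Union>(?F ` ?I)" for p
  proof -
    obtain K z n r where p: "p = (K, z, n, r)" by (metis prod_cases4)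
    show ?thesis
    proof
      assume "p \<in> setA (<)"
      then have h: "K \<in> topspace (vietoris cantor)" "r \<in> {0..1}" "mu (K \<inter> Nbhd (restr z n)) < r"
        by (auto simp: p memA memtopA)
      obtain q1 where q1: "q1 \<in> \<rat>" "mu (K \<inter> Nbhd (restr z n)) < q1" "q1 < r"
        using Rats_dense_in_real[OF h(3)] by blast
      obtain q2 where q2: "q2 \<in> \<rat>" "q1 < q2" "q2 < r"
        using Rats_dense_in_real[OF q1(3)] by blast
      obtain j where "ap j (tr j K) (restr z n) < q1" using KEYA[OF h(1)] q1 by blast
      then have "p \<in> ?F (j, q1, q2)" using h q2 by (auto simp: p mem_LA mem_RA memtopA)
      moreover have "(j, q1, q2) \<in> ?I" using q1 q2 by auto
      ultimately show "p \<in> \<Union>(?F ` ?I)" by blast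
    next
      assume "p \<in> \<Union>(?F ` ?I)"
      then obtain j q1 q2 where "p \<in> ?F (j, q1, q2)" "q1 < q2" by auto
      then have h: "K \<in> topspace (vietoris cantor)" "r \<in> {0..1}" "ap j (tr j K) (restr z n) < q1" "q1 < q2" "q2 \<le> r"
        by (auto simp: p mem_LA mem_RA memtopA)
      then have "mu (K \<inter> Nbhd (restr z n)) < q1" using KEYA[OF h(1)] by blast
      then show "p \<in> setA (<)" using h by (auto simp: p memA memtopA)
    qed
  qed
  then have eq: "setA (<) = \<Union>(?F ` ?I)" by blast
  have "?F x \<in> pi0 spaceA (Suc 0)" for x
    unfolding pi1_closed by (cases x) (auto intro!: closedin_Int LA_closed RA_closed)
  then have "\<Union>(?F ` ?I) \<in> sigma0 spaceA (Suc (Suc 0))"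
    by (intro sigma_Union countNQQ)
  then show ?thesis unfolding eq by simp
qed

lemma A_gt: "setA (>) \<in> sigma0 spaceA (Suc (Suc 0))"
proof -
  let ?I = "{(q1::real, q2::real). q1 \<in> \<rat> \<and> q2 \<in> \<rat> \<and> q1 < q2}"
  let ?F = "\<lambda>(q1, q2). RA {..q1} \<inter> (\<Inter>j. LA j {(T, s). q2 \<le> ap j T s})"
  have "p \<in> setA (>) \<longleftrightarrow> p \<in> \<Union>(?F ` ?I)" for p
  proof -
    obtain K z n r where p: "p = (K, z, n, r)" by (metis prod_cases4)
    show ?thesis
    proof
      assume "p \<in> setA (>)"
      then have h: "K \<in> topspace (vietoris cantor)" "r \<in> {0..1}" "r < mu (K \<inter> Nbhd (restr z n))"
        by (auto simp: p memA memtopA)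
      obtain q1 where q1: "q1 \<in> \<rat>" "r < q1" "q1 < mu (K \<inter> Nbhd (restr z n))"
        using Rats_dense_in_real[OF h(3)] by blast
      obtain q2 where q2: "q2 \<in> \<rat>" "q1 < q2" "q2 < mu (K \<inter> Nbhd (restr z n))"
        using Rats_dense_in_real[OF q1(3)] by blast
      have "q2 \<le> mu (K \<inter> Nbhd (restr z n))" using q2 by simp
      then have "\<forall>j. q2 \<le> ap j (tr j K) (restr z n)" using KEYA'[OF h(1)] by blast
      then have "p \<in> ?F (q1, q2)" using h q1 by (auto simp: p mem_LA mem_RA memtopA)
      moreover have "(q1, q2) \<in> ?I" using q1 q2 by auto
      ultimately show "p \<in> \<Union>(?F ` ?I)" by blast
    next
      assume "p \<in> \<Union>(?F ` ?I)"
      then obtain q1 q2 where "p \<in> ?F (q1, q2)" "q1 < q2" by auto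
      then have h: "K \<in> topspace (vietoris cantor)" "r \<in> {0..1}" "\<forall>j. q2 \<le> ap j (tr j K) (restr z n)" "q1 < q2" "r \<le> q1"
        by (auto simp: p mem_LA mem_RA memtopA)
      then have "q2 \<le> mu (K \<inter> Nbhd (restr z n))" using KEYA'[OF h(1)] by blast
      then show "p \<in> setA (>)" using h by (auto simp: p memA memtopA)
    qed
  qed
  then have eq: "setA (>) = \<Union>(?F ` ?I)" by blast
  have "?F x \<in> pi0 spaceA (Suc 0)" for x
    unfolding pi1_closed by (cases x) (auto intro!: closedin_Int closedin_Inter LA_closed RA_closed)
  then have "\<Union>(?F ` ?I) \<in> sigma0 spaceA (Suc (Suc 0))"
    by (intro sigma_Union countQQ)
  then show ?thesis unfolding eq by simp
qed

lemma A_ge_eq: "setA (\<ge>) = topspace spaceA - setA (<)"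
  by (auto simp: setA_def)

lemma A_le_eq: "setA (\<le>) = topspace spaceA - setA (>)"
  by (auto simp: setA_def)

lemma A_eq_eq: "setA (\<le>) \<inter> setA (\<ge>) = topspace spaceA - (setA (>) \<union> setA (<))"
  by (auto simp: setA_def)

definition Ub where "Ub n q = {p \<in> topspace spaceB. ratio (fst p) (fst (snd p)) n < q}"
definition Cb where "Cb n q = {p \<in> topspace spaceB. q \<le> ratio (fst p) (fst (snd p)) n}"

lemma Ub_eq: "Ub n q = (\<Union>j. LB j n {(T, s). rap j T s < q})"
proof -
  have "p \<in> Ub n q \<longleftrightarrow> p \<in> (\<Union>j. LB j n {(T, s). rap j T s < q})" for p
  proof -
    obtain K z r where p: "p = (K, z, r)" by (metis prod_cases3)
    show ?thesis
      by (cases "K \<in> topspace (vietoris cantor)") (auto simp: p Ub_def mem_LB memtopB KEYB)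
  qed
  then show ?thesis by blast
qed

lemma Cb_eq: "Cb n q = (\<Inter>j. LB j n {(T, s). q \<le> rap j T s})"
proof -
  have "p \<in> Cb n q \<longleftrightarrow> p \<in> (\<Inter>j. LB j n {(T, s). q \<le> rap j T s})" for p
  proof -
    obtain K z r where p: "p = (K, z, r)" by (metis prod_cases3)
    show ?thesis
      by (cases "K \<in> topspace (vietoris cantor)") (auto simp: p Cb_def mem_LB memtopB KEYB')
  qed
  then show ?thesis by blast
qed

lemma Ub_open: "openin spaceB (Ub n q)"
  unfolding Ub_eq by (intro openin_Union) (auto intro: LB_open)

lemma Cb_closed: "closedin spaceB (Cb n q)"
  unfolding Cb_eq by (intro closedin_Inter) (auto intro: LB_closed)

lemma Ub_UN_sigma2: "(\<Union>n\<in>{m..}. Ub n q) \<in> sigma0 spaceB (Suc (Suc 0))"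
proof -
  have "(\<Union>n\<in>{m..}. Ub n q) = \<Union>((\<lambda>(n, j). LB j n {(T, s). rap j T s < q}) ` ({m..} \<times> UNIV))"
    unfolding Ub_eq by auto
  moreover have "\<dots> \<in> sigma0 spaceB (Suc (Suc 0))"
    by (intro sigma_Union) (auto simp: pi1_closed intro: LB_closed)
  ultimately show ?thesis by simp
qed

lemma Cb_UN_sigma2: "(\<Union>n\<in>{m..}. Cb n q) \<in> sigma0 spaceB (Suc (Suc 0))"
  by (intro sigma_Union) (auto simp: pi1_closed intro: Cb_closed)

lemma memUb: "(K, z, r) \<in> Ub n q \<longleftrightarrow> (K, z, r) \<in> topspace spaceB \<and> ratio K z n < q"
  by (simp add: Ub_def)
lemma memCb: "(K, z, r) \<in> Cb n q \<longleftrightarrow> (K, z, r) \<in> topspace spaceB \<and> q \<le> ratio K z n"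
  by (simp add: Cb_def)

lemma Bm_gt: "setBminus (>) \<in> sigma0 spaceB (Suc (Suc 0))"
proof -
  let ?I = "{(q1::real, q2::real, m::nat). q1 \<in> \<rat> \<and> q2 \<in> \<rat> \<and> q1 < q2}"
  let ?F = "\<lambda>(q1, q2, m). RB {..q1} \<inter> (\<Inter>n\<in>{m..}. Cb n q2)"
  have "p \<in> setBminus (>) \<longleftrightarrow> p \<in> \<Union>(?F ` ?I)" for p
  proof -
    obtain K z r where p: "p = (K, z, r)" by (metis prod_cases3)
    have "p \<in> setBminus (>) \<longleftrightarrow> p \<in> topspace spaceB \<and>
       (\<exists>q1\<in>\<rat>. \<exists>q2\<in>\<rat>. r \<le> q1 \<and> q1 < q2 \<and> (\<exists>m. \<forall>n\<ge>m. q2 \<le> ratio K z n))"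
      by (simp add: p memBm Dminus_def S1)
    also have "\<dots> \<longleftrightarrow> p \<in> \<Union>(?F ` ?I)"
      by (auto simp: p mem_RB memCb)
    finally show ?thesis .
  qed
  then have eq: "setBminus (>) = \<Union>(?F ` ?I)" by blast
  have "?F x \<in> pi0 spaceB (Suc 0)" for x
    unfolding pi1_closed by (cases x) (auto intro!: closedin_Int closedin_Inter Cb_closed RB_closed)
  then have "\<Union>(?F ` ?I) \<in> sigma0 spaceB (Suc (Suc 0))"
    by (intro sigma_Union countQQN)
  then show ?thesis unfolding eq by simp
qed

lemma Bm_lt3: "setBminus (<) \<in> sigma0 spaceB (Suc (Suc (Suc 0)))"
proof -
  let ?S = "\<lambda>q. case_option (RB {q<..}) (\<lambda>m. \<Union>n\<in>{m..}. Ub n q)"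
  let ?F = "\<lambda>q. topspace spaceB \<inter> \<Inter>(?S q ` UNIV)"
  have "p \<in> setBminus (<) \<longleftrightarrow> p \<in> \<Union>(?F ` \<rat>)" for p
  proof -
    obtain K z r where p: "p = (K, z, r)" by (metis prod_cases3)
    have "p \<in> setBminus (<) \<longleftrightarrow> p \<in> topspace spaceB \<and>
       (\<exists>q\<in>\<rat>. q < r \<and> (\<forall>m. \<exists>n\<ge>m. ratio K z n < q))"
      by (simp add: p memBm Dminus_def S2a)
    also have "\<dots> \<longleftrightarrow> p \<in> \<Union>(?F ` \<rat>)"
    proof
      assume "p \<in> topspace spaceB \<and> (\<exists>q\<in>\<rat>. q < r \<and> (\<forall>m. \<exists>n\<ge>m. ratio K z n < q))"
      then obtain q where "q \<in> \<rat>" "p \<in> topspace spaceB" "q < r" "\<forall>m. \<exists>n\<ge>m. ratio K z n < q" by blast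
      then have "p \<in> ?F q" by (auto simp: p mem_RB memUb split: option.splits)
      then show "p \<in> \<Union>(?F ` \<rat>)" using \<open>q \<in> \<rat>\<close> by blast
    next
      assume "p \<in> \<Union>(?F ` \<rat>)"
      then obtain q where q: "q \<in> \<rat>" "p \<in> ?F q" by blast
      then have s1: "p \<in> ?S q None" and s2: "\<And>m. p \<in> ?S q (Some m)" by blast+
      have B: "\<forall>m. \<exists>n\<ge>m. ratio K z n < q"
      proof
        fix m obtain n where "n \<in> {m..}" "p \<in> Ub n q" using s2[of m] by auto
        then show "\<exists>n\<ge>m. ratio K z n < q" by (auto simp: p memUb)
      qed
      have "p \<in> topspace spaceB" "q < r" using s1 by (auto simp: p mem_RB)
      then show "p \<in> topspace spaceB \<and> (\<exists>q\<in>\<rat>. q < r \<and> (\<forall>m. \<exists>n\<ge>m. ratio K z n < q))"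
        using q B by blast
    qed
    finally show ?thesis .
  qed
  then have eq: "setBminus (<) = \<Union>(?F ` \<rat>)" by blast
  have "?S q x \<in> sigma0 spaceB (Suc 0)" for q x
    by (cases x) (auto intro!: RB_open Ub_open openin_Union)
  then have "?F q \<in> pi0 spaceB (Suc (Suc 0))" for q
    by (intro pi_Inter) auto
  then have "\<Union>(?F ` \<rat>) \<in> sigma0 spaceB (Suc (Suc (Suc 0)))"
    by (intro sigma_Union countable_rat)
  then show ?thesis unfolding eq by simp
qed

lemma Bp_lt3: "setBplus (<) \<in> sigma0 spaceB (Suc (Suc (Suc 0)))"
proof -
  let ?S = "\<lambda>(q, m). case_option (RB {q<..}) (\<lambda>n. if m \<le> n then Ub n q else topspace spaceB)"
  let ?F = "\<lambda>x. topspace spaceB \<inter> \<Inter>(?S x ` UNIV)"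
  let ?I = "\<rat> \<times> (UNIV :: nat set)"
  have "p \<in> setBplus (<) \<longleftrightarrow> p \<in> \<Union>(?F ` ?I)" for p
  proof -
    obtain K z r where p: "p = (K, z, r)" by (metis prod_cases3)
    have "p \<in> setBplus (<) \<longleftrightarrow> p \<in> topspace spaceB \<and>
       (\<exists>q\<in>\<rat>. q < r \<and> (\<exists>m. \<forall>n\<ge>m. ratio K z n < q))"
      by (simp add: p memBp Dplus_def S3)
    also have "\<dots> \<longleftrightarrow> p \<in> \<Union>(?F ` ?I)"
    proof
      assume "p \<in> topspace spaceB \<and> (\<exists>q\<in>\<rat>. q < r \<and> (\<exists>m. \<forall>n\<ge>m. ratio K z n < q))"
      then obtain q m where "q \<in> \<rat>" "p \<in> topspace spaceB" "q < r" "\<forall>n\<ge>m. ratio K z n < q" by blast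
      then have "p \<in> ?F (q, m)" by (auto simp: p mem_RB memUb split: option.splits)
      then show "p \<in> \<Union>(?F ` ?I)" using \<open>q \<in> \<rat>\<close> by blast
    next
      assume "p \<in> \<Union>(?F ` ?I)"
      then obtain q m where q: "q \<in> \<rat>" "p \<in> ?F (q, m)" by blast
      then have "p \<in> ?S (q, m) None" "\<And>n. p \<in> ?S (q, m) (Some n)" by blast+
      then have "p \<in> topspace spaceB" "q < r" "\<forall>n\<ge>m. ratio K z n < q"
        by (auto simp: p mem_RB memUb) (metis memUb)
      then show "p \<in> topspace spaceB \<and> (\<exists>q\<in>\<rat>. q < r \<and> (\<exists>m. \<forall>n\<ge>m. ratio K z n < q))"
        using q by blast
    qed
    finally show ?thesis .
  qed
  then have eq: "setBplus (<) = \<Union>(?F ` ?I)" by blast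
  have "?S x y \<in> sigma0 spaceB (Suc 0)" for x y
    by (cases x; cases y) (auto intro!: RB_open Ub_open)
  then have "?F x \<in> pi0 spaceB (Suc (Suc 0))" for x
    by (intro pi_Inter) auto
  then have "\<Union>(?F ` ?I) \<in> sigma0 spaceB (Suc (Suc (Suc 0)))"
    by (intro sigma_Union countQN)
  then show ?thesis unfolding eq by simp
qed

lemma Bp_gt4: "setBplus (>) \<in> sigma0 spaceB (Suc (Suc (Suc (Suc 0))))"
proof -
  let ?I = "{(q1::real, q2::real). q1 \<in> \<rat> \<and> q2 \<in> \<rat> \<and> q1 < q2}"
  let ?S = "\<lambda>(q1, q2). case_option (RB {..q1}) (\<lambda>m. \<Union>n\<in>{m..}. Cb n q2)"
  let ?F = "\<lambda>x. topspace spaceB \<inter> \<Inter>(?S x ` UNIV)"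
  have "p \<in> setBplus (>) \<longleftrightarrow> p \<in> \<Union>(?F ` ?I)" for p
  proof -
    obtain K z r where p: "p = (K, z, r)" by (metis prod_cases3)
    have "p \<in> setBplus (>) \<longleftrightarrow> p \<in> topspace spaceB \<and>
       (\<exists>q1\<in>\<rat>. \<exists>q2\<in>\<rat>. r \<le> q1 \<and> q1 < q2 \<and> (\<forall>m. \<exists>n\<ge>m. q2 \<le> ratio K z n))"
      by (simp add: p memBp Dplus_def S4)
    also have "\<dots> \<longleftrightarrow> p \<in> \<Union>(?F ` ?I)"
    proof
      assume "p \<in> topspace spaceB \<and> (\<exists>q1\<in>\<rat>. \<exists>q2\<in>\<rat>. r \<le> q1 \<and> q1 < q2 \<and> (\<forall>m. \<exists>n\<ge>m. q2 \<le> ratio K z n))"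
      then obtain q1 q2 where "q1 \<in> \<rat>" "q2 \<in> \<rat>" "p \<in> topspace spaceB" "r \<le> q1" "q1 < q2"
        "\<forall>m. \<exists>n\<ge>m. q2 \<le> ratio K z n" by blast
      then have "p \<in> ?F (q1, q2)" "(q1, q2) \<in> ?I" by (auto simp: p mem_RB memCb split: option.splits)
      then show "p \<in> \<Union>(?F ` ?I)" by blast
    next
      assume "p \<in> \<Union>(?F ` ?I)"
      then obtain q1 q2 where q: "q1 \<in> \<rat>" "q2 \<in> \<rat>" "q1 < q2" "p \<in> ?F (q1, q2)" by blast
      then have s1: "p \<in> ?S (q1, q2) None" and s2: "\<And>m. p \<in> ?S (q1, q2) (Some m)" by blast+
      have B: "\<forall>m. \<exists>n\<ge>m. q2 \<le> ratio K z n"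
      proof
        fix m obtain n where "n \<in> {m..}" "p \<in> Cb n q2" using s2[of m] by auto
        then show "\<exists>n\<ge>m. q2 \<le> ratio K z n" by (auto simp: p memCb)
      qed
      have "p \<in> topspace spaceB" "r \<le> q1" using s1 by (auto simp: p mem_RB)
      then show "p \<in> topspace spaceB \<and> (\<exists>q1\<in>\<rat>. \<exists>q2\<in>\<rat>. r \<le> q1 \<and> q1 < q2 \<and> (\<forall>m. \<exists>n\<ge>m. q2 \<le> ratio K z n))"
        using q B by blast
    qed
    finally show ?thesis .
  qed
  then have eq: "setBplus (>) = \<Union>(?F ` ?I)" by blast
  have "?S x y \<in> sigma0 spaceB (Suc (Suc 0))" for x y
    by (cases x; cases y) (auto simp del: sigma0.simps intro!: closed_sigma2 RB_closed Cb_UN_sigma2)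
  then have "?F x \<in> pi0 spaceB (Suc (Suc (Suc 0)))" for x
    by (intro pi_Inter) auto
  then have "\<Union>(?F ` ?I) \<in> sigma0 spaceB (Suc (Suc (Suc (Suc 0))))"
    by (intro sigma_Union countQQ)
  then show ?thesis unfolding eq by simp
qed

lemma Bm_lt4: "setBminus (<) \<in> sigma0 spaceB (Suc (Suc (Suc (Suc 0))))"
proof -
  let ?I = "{(q1::real, q2::real). q1 \<in> \<rat> \<and> q2 \<in> \<rat> \<and> q1 < q2}"
  let ?S = "\<lambda>(q1, q2). case_option (RB {q2..}) (\<lambda>m. \<Union>n\<in>{m..}. Ub n q1)"
  let ?F = "\<lambda>x. topspace spaceB \<inter> \<Inter>(?S x ` UNIV)"
  have "p \<in> setBminus (<) \<longleftrightarrow> p \<in> \<Union>(?F ` ?I)" for p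
  proof -
    obtain K z r where p: "p = (K, z, r)" by (metis prod_cases3)
    have "p \<in> setBminus (<) \<longleftrightarrow> p \<in> topspace spaceB \<and>
       (\<exists>q1\<in>\<rat>. \<exists>q2\<in>\<rat>. q1 < q2 \<and> q2 \<le> r \<and> (\<forall>m. \<exists>n\<ge>m. ratio K z n < q1))"
      by (simp add: p memBm Dminus_def S2b)
    also have "\<dots> \<longleftrightarrow> p \<in> \<Union>(?F ` ?I)"
    proof
      assume "p \<in> topspace spaceB \<and> (\<exists>q1\<in>\<rat>. \<exists>q2\<in>\<rat>. q1 < q2 \<and> q2 \<le> r \<and> (\<forall>m. \<exists>n\<ge>m. ratio K z n < q1))"
      then obtain q1 q2 where "q1 \<in> \<rat>" "q2 \<in> \<rat>" "p \<in> topspace spaceB" "q2 \<le> r" "q1 < q2"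
        "\<forall>m. \<exists>n\<ge>m. ratio K z n < q1" by blast
      then have "p \<in> ?F (q1, q2)" "(q1, q2) \<in> ?I" by (auto simp: p mem_RB memUb split: option.splits)
      then show "p \<in> \<Union>(?F ` ?I)" by blast
    next
      assume "p \<in> \<Union>(?F ` ?I)"
      then obtain q1 q2 where q: "q1 \<in> \<rat>" "q2 \<in> \<rat>" "q1 < q2" "p \<in> ?F (q1, q2)" by blast
      then have s1: "p \<in> ?S (q1, q2) None" and s2: "\<And>m. p \<in> ?S (q1, q2) (Some m)" by blast+
      have B: "\<forall>m. \<exists>n\<ge>m. ratio K z n < q1"
      proof
        fix m obtain n where "n \<in> {m..}" "p \<in> Ub n q1" using s2[of m] by auto
        then show "\<exists>n\<ge>m. ratio K z n < q1" by (auto simp: p memUb)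
      qed
      have "p \<in> topspace spaceB" "q2 \<le> r" using s1 by (auto simp: p mem_RB)
      then show "p \<in> topspace spaceB \<and> (\<exists>q1\<in>\<rat>. \<exists>q2\<in>\<rat>. q1 < q2 \<and> q2 \<le> r \<and> (\<forall>m. \<exists>n\<ge>m. ratio K z n < q1))"
        using q B by blast
    qed
    finally show ?thesis .
  qed
  then have eq: "setBminus (<) = \<Union>(?F ` ?I)" by blast
  have "?S x y \<in> sigma0 spaceB (Suc (Suc 0))" for x y
    by (cases x; cases y) (auto simp del: sigma0.simps intro!: closed_sigma2 RB_closed Ub_UN_sigma2)
  then have "?F x \<in> pi0 spaceB (Suc (Suc (Suc 0)))" for x
    by (intro pi_Inter) auto
  then have "\<Union>(?F ` ?I) \<in> sigma0 spaceB (Suc (Suc (Suc (Suc 0))))"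
    by (intro sigma_Union countQQ)
  then show ?thesis unfolding eq by simp
qed

lemma Bm_le_eq: "setBminus (\<le>) = topspace spaceB - setBminus (>)"
  by (auto simp: setBminus_def)
lemma Bm_ge_eq: "setBminus (\<ge>) = topspace spaceB - setBminus (<)"
  by (auto simp: setBminus_def)
lemma Bp_ge_eq: "setBplus (\<ge>) = topspace spaceB - setBplus (<)"
  by (auto simp: setBplus_def)
lemma Bp_le_eq: "setBplus (\<le>) = topspace spaceB - setBplus (>)"
  by (auto simp: setBplus_def)
lemma B_eq: "setBplus (\<le>) \<inter> setBminus (\<ge>) = topspace spaceB - (setBplus (>) \<union> setBminus (<))"
  by (auto simp: setBplus_def setBminus_def)

lemma four: "(4::nat) = Suc (Suc (Suc (Suc 0)))" by simp

theorem lemma3p1: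
  shows "setA (<) \<in> sigma0 spaceA 1 \<and> setA (\<ge>) \<in> pi0 spaceA 1 \<and>
         setA (\<le>) \<in> pi0 spaceA 2 \<and> setA (>) \<in> sigma0 spaceA 2 \<and>
         setA (\<le>) \<inter> setA (\<ge>) \<in> pi0 spaceA 2 \<and>
         setBminus (\<le>) \<in> pi0 spaceB 2 \<and>
         setBminus (\<ge>) \<in> pi0 spaceB 3 \<and> setBplus (\<ge>) \<in> pi0 spaceB 3 \<and>
         setBplus (\<le>) \<in> pi0 spaceB 4 \<and>
         setBminus (>) \<in> sigma0 spaceB 2 \<and>
         setBminus (<) \<in> sigma0 spaceB 3 \<and> setBplus (<) \<in> sigma0 spaceB 3 \<and>
         setBplus (>) \<in> sigma0 spaceB 4 \<and>
         setBplus (\<le>) \<inter> setBminus (\<ge>) \<in> pi0 spaceB 4"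
proof -
  have a1: "setA (\<ge>) \<in> pi0 spaceA (Suc 0)" unfolding A_ge_eq by (rule compl_pi[OF A_lt])
  have a2: "setA (\<le>) \<in> pi0 spaceA (Suc (Suc 0))" unfolding A_le_eq by (rule compl_pi[OF A_gt])
  have a3: "setA (\<le>) \<inter> setA (\<ge>) \<in> pi0 spaceA (Suc (Suc 0))"
    unfolding A_eq_eq by (rule compl_pi[OF sigma_Un[OF A_gt A_lt2]])
  have b1: "setBminus (\<le>) \<in> pi0 spaceB (Suc (Suc 0))" unfolding Bm_le_eq by (rule compl_pi[OF Bm_gt])
  have b2: "setBminus (\<ge>) \<in> pi0 spaceB (Suc (Suc (Suc 0)))" unfolding Bm_ge_eq by (rule compl_pi[OF Bm_lt3])
  have b3: "setBplus (\<ge>) \<in> pi0 spaceB (Suc (Suc (Suc 0)))" unfolding Bp_ge_eq by (rule compl_pi[OF Bp_lt3])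
  have b4: "setBplus (\<le>) \<in> pi0 spaceB (Suc (Suc (Suc (Suc 0))))" unfolding Bp_le_eq by (rule compl_pi[OF Bp_gt4])
  have b5: "setBplus (\<le>) \<inter> setBminus (\<ge>) \<in> pi0 spaceB (Suc (Suc (Suc (Suc 0))))"
    unfolding B_eq by (rule compl_pi[OF sigma_Un[OF Bp_gt4 Bm_lt4]])
  show ?thesis
    unfolding One_nat_def numeral_2_eq_2 numeral_3_eq_3 four
    by (intro conjI A_lt A_gt Bm_gt Bm_lt3 Bp_lt3 Bp_gt4 a1 a2 a3 b1 b2 b3 b4 b5)
qed


end
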